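(* Let $p(g\mid\mathbf w)=\sum_{k\in\mathcal A}\theta_kP_{(k)}(w_{-k},g)$ be an imitation kernel on a finite set $G$ with $\gcd(\mathcal A)=1$, and assume the $G$-stochastic function $P_{(\cdot)}$ is irreducible and aperiodic. Let $\hat\lambda$ be the unique invariant distribution of $\hat P=\sum_{k\in\mathcal A}\theta_kP_{(k)}$. Then for every $n\in\mathbb Z$ and every configuration $\mathbf w\in G^{\mathbb Z}$, the law of $X_n^{r,\mathbf w}$ converges to $\hat\lambda$ as $r\to-\infty$.
   Context: $\mathcal A\subset\mathbb N_+$, $\theta$ a probability on $\mathcal A$ with $\theta_k>0$, $P_{(k)}$ stochastic matrices on $G$. Words $\mathcal A^*=\bigcup_{n\ge1}\mathcal A^n$, $P_{\mathbf a}=P_{(a_n)}\cdots P_{(a_1)}$ and depth $s(\mathbf a)=\sum a_i$ for $\mathbf a=(a_1,\dots,a_n)$. $P_{(\cdot)}$ is irreducible if for all $i,j$ some word has $P_{\mathbf a}(i,j)>0$; aperiodic if moreover $\gcd\{s(\mathbf a):P_{\mathbf a}(i,i)>0\}=1$ for every $i$. For $\mathbf w\in G^{\mathbb Z}$ and $r\in\mathbb Z$, $\mathbf X^{r,\mathbf w}$ is the process with $X^{r,\mathbf w}_n=w_n$ for $n\le r$ and $P(X_n^{r,\mathbf w}=g\mid X_{n-1}^{r,\mathbf w},X_{n-2}^{r,\mathbf w},\dots)=p(g\mid X_{n-1}^{r,\mathbf w},X_{n-2}^{r,\mathbf w},\dots)$ a.s. for $n>r$. *)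

theory Defs
  imports "HOL-Probability.Probability"
begin

text \<open>Stochastic matrices on G are given by their rows: P k i is the probability
distribution of the next state given current state i, so P_(k)(i,j) = pmf (P k i) j.
The probability theta on the alphabet A is a pmf on nat whose support is A.\<close>

text \<open>Entry (i,j) of the word matrix P_a = P_(a_n) ... P_(a_1) for a = [a_1,...,a_n].
Recursion: P_(a_1 # as) = P_as * P_(a_1).\<close>
fun word_mat :: "(nat \<Rightarrow> 'g::finite \<Rightarrow> 'g pmf) \<Rightarrow> nat list \<Rightarrow> 'g \<Rightarrow> 'g \<Rightarrow> real" where
  "word_mat P [] i j = (if i = j then 1 else 0)"
| "word_mat P (a # as) i j = (\<Sum>h\<in>UNIV. word_mat P as i h * pmf (P a h) j)"

definition depth :: "nat list \<Rightarrow> nat" where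
  "depth a = sum_list a"

definition words :: "nat set \<Rightarrow> nat list set" where
  "words A = {a. a \<noteq> [] \<and> set a \<subseteq> A}"

definition irreducible_sf :: "nat set \<Rightarrow> (nat \<Rightarrow> 'g::finite \<Rightarrow> 'g pmf) \<Rightarrow> bool" where
  "irreducible_sf A P \<longleftrightarrow> (\<forall>i j. \<exists>a\<in>words A. word_mat P a i j > 0)"

definition aperiodic_sf :: "nat set \<Rightarrow> (nat \<Rightarrow> 'g::finite \<Rightarrow> 'g pmf) \<Rightarrow> bool" where
  "aperiodic_sf A P \<longleftrightarrow> irreducible_sf A P \<and>
     (\<forall>i. Gcd (depth ` {a\<in>words A. word_mat P a i i > 0}) = 1)"

definition hatP :: "nat pmf \<Rightarrow> (nat \<Rightarrow> 'g \<Rightarrow> 'g pmf) \<Rightarrow> 'g \<Rightarrow> 'g pmf" where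
  "hatP \<theta> P i = bind_pmf \<theta> (\<lambda>k. P k i)"

definition invariant_dist :: "('g \<Rightarrow> 'g pmf) \<Rightarrow> 'g pmf \<Rightarrow> bool" where
  "invariant_dist Q \<mu> \<longleftrightarrow> bind_pmf \<mu> Q = \<mu>"

definition imit_kernel :: "nat pmf \<Rightarrow> (nat \<Rightarrow> 'g \<Rightarrow> 'g pmf) \<Rightarrow> (int \<Rightarrow> 'g) \<Rightarrow> int \<Rightarrow> 'g pmf" where
  "imit_kernel \<theta> P x t = bind_pmf \<theta> (\<lambda>k. P k (x (t - int k)))"

text \<open>Joint law of the path of X^{r,w} after m steps, i.e. of (X_s)_{s \<le> r+m}
 (values at times > r+m are still those of w and are irrelevant).\<close>
fun traj :: "nat pmf \<Rightarrow> (nat \<Rightarrow> 'g \<Rightarrow> 'g pmf) \<Rightarrow> int \<Rightarrow> (int \<Rightarrow> 'g) \<Rightarrow> nat \<Rightarrow> (int \<Rightarrow> 'g) pmf" where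
  "traj \<theta> P r w 0 = return_pmf w"
| "traj \<theta> P r w (Suc m) = bind_pmf (traj \<theta> P r w m)
     (\<lambda>x. map_pmf (\<lambda>g. x(r + int m + 1 := g)) (imit_kernel \<theta> P x (r + int m + 1)))"

definition law_X :: "nat pmf \<Rightarrow> (nat \<Rightarrow> 'g \<Rightarrow> 'g pmf) \<Rightarrow> int \<Rightarrow> (int \<Rightarrow> 'g) \<Rightarrow> int \<Rightarrow> 'g pmf" where
  "law_X \<theta> P r w n = map_pmf (\<lambda>x. x n) (traj \<theta> P r w (nat (n - r)))"

end

theory Submission
  imports Defs "HOL-Library.Diagonal_Subsequence"
begin

lemma pmf_integrable_bdd:
  fixes f :: "'a \<Rightarrow> real"
  assumes "\<And>x. \<bar>f x\<bar> \<le> B"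
  shows "integrable (measure_pmf p) f"
  using assms by (intro measure_pmf.integrable_const_bound[where B=B]) auto

lemma pmf_le_integral:
  fixes f :: "'a \<Rightarrow> real"
  assumes "\<And>y. 0 \<le> f y" "\<And>y. f y \<le> B"
  shows "pmf p x * f x \<le> measure_pmf.expectation p f"
proof -
  have i1: "integrable (measure_pmf p) f"
    by (rule pmf_integrable_bdd[where B=B]) (use assms in auto)
  have i2: "integrable (measure_pmf p) (\<lambda>y. f x * indicator {x} y)"
    by (rule pmf_integrable_bdd[where B="\<bar>f x\<bar>"]) (auto split: split_indicator)
  have "measure_pmf.expectation p (\<lambda>y. f x * indicator {x} y) \<le> measure_pmf.expectation p f"
    by (intro integral_mono i1 i2) (auto split: split_indicator simp: assms)
  moreover have "measure_pmf.expectation p (\<lambda>y. f x * indicator {x} y) = f x * pmf p x"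
    by (simp add: measure_pmf_single)
  ultimately have "f x * pmf p x \<le> measure_pmf.expectation p f" by linarith
  then show ?thesis by (simp add: mult.commute)
qed

lemma pmf_le_integral':
  fixes f :: "'a \<Rightarrow> real"
  assumes "integrable (measure_pmf p) f" "\<And>y. 0 \<le> f y"
  shows "pmf p x * f x \<le> measure_pmf.expectation p f"
proof -
  have i2: "integrable (measure_pmf p) (\<lambda>y. f x * indicator {x} y)"
    by (rule pmf_integrable_bdd[where B="\<bar>f x\<bar>"]) (auto split: split_indicator)
  have "measure_pmf.expectation p (\<lambda>y. f x * indicator {x} y) \<le> measure_pmf.expectation p f"
    by (intro integral_mono assms i2) (auto split: split_indicator simp: assms)
  moreover have "measure_pmf.expectation p (\<lambda>y. f x * indicator {x} y) = f x * pmf p x"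
    by (simp add: measure_pmf_single)
  ultimately have "f x * pmf p x \<le> measure_pmf.expectation p f" by linarith
  then show ?thesis by (simp add: mult.commute)
qed

lemma word_mat_nonneg: "0 \<le> word_mat P w i j"
  by (induction w arbitrary: j) (auto intro!: sum_nonneg)

lemma word_mat_cons_pos:
  assumes "word_mat P (a # as) i j > 0"
  shows "\<exists>h. word_mat P as i h > 0 \<and> pmf (P a h) j > 0"
proof (rule ccontr)
  assume "\<not> ?thesis"
  then have "\<And>h. word_mat P as i h * pmf (P a h) j \<le> 0"
    using word_mat_nonneg[of P as i] pmf_nonneg
    by (metis less_eq_real_def mult_eq_0_iff)
  then have "word_mat P (a # as) i j \<le> 0" by (simp add: sum_nonpos)
  with assms show False by simp
qed

lemma finite_Gcd_subset:
  fixes S :: "nat set"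
  assumes "Gcd S = 1"
  shows "\<exists>F. finite F \<and> F \<subseteq> S \<and> Gcd F = 1"
proof -
  obtain x where x: "x \<in> S" "x > 0"
    using assms by (metis Gcd_0_iff gr0I insert_absorb subset_insertI zero_neq_one subsetI singletonI)
  define Q where "Q = (\<lambda>c. \<exists>F. finite F \<and> F \<subseteq> S \<and> Gcd F = c \<and> 0 < c)"
  have "Q x" unfolding Q_def using x by (intro exI[of _ "{x}"]) auto
  then have Qc: "Q (LEAST c. Q c)" by (rule LeastI)
  define c where "c = (LEAST c. Q c)"
  obtain F0 where F0: "finite F0" "F0 \<subseteq> S" "Gcd F0 = c" "0 < c" using Qc unfolding Q_def c_def by blast
  have "c dvd z" if "z \<in> S" for z
  proof -
    have "Q (gcd z c)" unfolding Q_def using F0 that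
      by (intro exI[of _ "insert z F0"]) auto
    then have "c \<le> gcd z c" unfolding c_def by (rule Least_le)
    moreover have "gcd z c \<le> c" using F0 by simp
    ultimately have "gcd z c = c" by simp
    then show ?thesis by (metis gcd_dvd1)
  qed
  then have "c dvd Gcd S" by (rule Gcd_greatest)
  then have "c = 1" using assms by simp
  then show ?thesis using F0 by blast
qed

lemma diag_conv:
  fixes F :: "nat \<Rightarrow> 'a::countable \<Rightarrow> real"
  assumes bnd: "\<And>m x. \<bar>F m x\<bar> \<le> B"
  shows "\<exists>\<sigma> \<nu>. strict_mono \<sigma> \<and> (\<forall>x. (\<lambda>m. F (\<sigma> m) x) \<longlonglongrightarrow> \<nu> x)"
proof -
  interpret subseqs "\<lambda>n s. convergent (\<lambda>m. F (s m) (from_nat n))"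
  proof
    fix n and s :: "nat \<Rightarrow> nat" assume "strict_mono s"
    obtain r where r: "strict_mono r" "monoseq (\<lambda>m. F (s (r m)) (from_nat n))"
      using seq_monosub[of "\<lambda>m. F (s m) (from_nat n)"] by blast
    have "Bseq (\<lambda>m. F (s (r m)) (from_nat n))" using bnd by (intro BseqI'[where K=B]) simp
    then have "convergent (\<lambda>m. F (s (r m)) (from_nat n))" using r(2) by (rule Bseq_monoseq_convergent)
    then show "\<exists>r'. strict_mono r' \<and> convergent (\<lambda>m. F ((s \<circ> r') m) (from_nat n))"
      using r(1) by (auto simp: o_def)
  qed
  have cv: "convergent (\<lambda>m. F (diagseq m) x)" for x
  proof -
    have "convergent (\<lambda>m. F ((diagseq \<circ> (+) (Suc (to_nat x))) m) (from_nat (to_nat x)))"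
      by (rule diagseq_holds) (auto simp: o_def dest: convergent_subseq_convergent[unfolded o_def])
    then have "convergent (\<lambda>m. F (diagseq (m + Suc (to_nat x))) x)" by (simp add: o_def add.commute)
    then show ?thesis by (rule convergent_ignore_initial_segment[THEN iffD1])
  qed
  show ?thesis
    by (rule exI[of _ diagseq], rule exI[of _ "\<lambda>x. lim (\<lambda>m. F (diagseq m) x)"])
       (use cv subseq_diagseq in \<open>auto simp: convergent_LIMSEQ_iff\<close>)
qed

lemma traj_stable:
  assumes "t \<le> r + int m"
  shows "map_pmf (\<lambda>x. x t) (traj \<theta> P r w (Suc m)) = map_pmf (\<lambda>x. x t) (traj \<theta> P r w m)"
proof -
  have "map_pmf (\<lambda>x. x t) (traj \<theta> P r w (Suc m))
      = bind_pmf (traj \<theta> P r w m) (\<lambda>x. map_pmf (\<lambda>g. (x(r + int m + 1 := g)) t) (imit_kernel \<theta> P x (r + int m + 1)))"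
    by (simp add: map_bind_pmf map_pmf_comp)
  also have "\<dots> = bind_pmf (traj \<theta> P r w m) (\<lambda>x. return_pmf (x t))"
    using assms by (intro bind_pmf_cong refl) simp
  also have "\<dots> = map_pmf (\<lambda>x. x t) (traj \<theta> P r w m)" by (simp add: map_pmf_def)
  finally show ?thesis .
qed

lemma traj_marg:
  assumes "nat (t - r) \<le> m"
  shows "map_pmf (\<lambda>x. x t) (traj \<theta> P r w m) = law_X \<theta> P r w t"
  using assms
proof (induction m)
  case 0 then show ?case by (simp add: law_X_def)
next
  case (Suc m)
  show ?case
  proof (cases "nat (t - r) \<le> m")
    case True
    then have "t \<le> r + int m" by linarith
    then show ?thesis using traj_stable Suc True by metis
  next
    case False
    then have "nat (t - r) = Suc m" using Suc.prems by simp
    then show ?thesis by (simp add: law_X_def)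
  qed
qed

lemma law_X_rec:
  assumes "r < t" and pos0: "0 \<notin> set_pmf \<theta>"
  shows "law_X \<theta> P r w t = bind_pmf \<theta> (\<lambda>k. bind_pmf (law_X \<theta> P r w (t - int k)) (P k))"
proof -
  define m where "m = nat (t - r) - 1"
  have tm: "t = r + int m + 1" and nm: "nat (t - r) = Suc m" using assms unfolding m_def by auto
  have "law_X \<theta> P r w t = map_pmf (\<lambda>x. x t) (traj \<theta> P r w (Suc m))"
    by (simp add: law_X_def nm)
  also have "\<dots> = bind_pmf (traj \<theta> P r w m) (\<lambda>x. imit_kernel \<theta> P x t)"
    by (simp add: map_bind_pmf map_pmf_comp tm)
  also have "\<dots> = bind_pmf \<theta> (\<lambda>k. bind_pmf (traj \<theta> P r w m) (\<lambda>x. P k (x (t - int k))))"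
    unfolding imit_kernel_def by (rule bind_commute_pmf)
  also have "\<dots> = bind_pmf \<theta> (\<lambda>k. bind_pmf (map_pmf (\<lambda>x. x (t - int k)) (traj \<theta> P r w m)) (P k))"
    by (simp add: bind_map_pmf)
  also have "\<dots> = bind_pmf \<theta> (\<lambda>k. bind_pmf (law_X \<theta> P r w (t - int k)) (P k))"
  proof (rule bind_pmf_cong[OF refl])
    fix k assume "k \<in> set_pmf \<theta>"
    then have "k \<noteq> 0" using pos0 by (metis)
    then have "nat (t - int k - r) \<le> m" using tm by linarith
    then show "bind_pmf (map_pmf (\<lambda>x. x (t - int k)) (traj \<theta> P r w m)) (P k) = bind_pmf (law_X \<theta> P r w (t - int k)) (P k)"
      by (simp add: traj_marg)
  qed
  finally show ?thesis .
qed

lemma law_X_rec_real: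
  assumes "r < t" and pos0: "0 \<notin> set_pmf \<theta>"
  shows "pmf (law_X \<theta> P r w t) j = measure_pmf.expectation \<theta>
           (\<lambda>k. \<Sum>i\<in>UNIV. pmf (law_X \<theta> P r w (t - int k)) i * pmf (P k i) (j::'g::finite))"
proof -
  have "pmf (law_X \<theta> P r w t) j = measure_pmf.expectation \<theta>
           (\<lambda>k. pmf (bind_pmf (law_X \<theta> P r w (t - int k)) (P k)) j)"
    by (simp add: law_X_rec[OF assms] pmf_bind)
  also have "\<dots> = measure_pmf.expectation \<theta>
           (\<lambda>k. \<Sum>i\<in>UNIV. pmf (law_X \<theta> P r w (t - int k)) i * pmf (P k i) j)"
  proof (intro Bochner_Integration.integral_cong refl)
    fix k
    have "pmf (bind_pmf (law_X \<theta> P r w (t - int k)) (P k)) j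
        = measure_pmf.expectation (law_X \<theta> P r w (t - int k)) (\<lambda>i. pmf (P k i) j)" by (rule pmf_bind)
    also have "\<dots> = (\<Sum>i\<in>UNIV. pmf (P k i) j * pmf (law_X \<theta> P r w (t - int k)) i)"
      by (rule integral_measure_pmf_real) auto
    finally show "pmf (bind_pmf (law_X \<theta> P r w (t - int k)) (P k)) j
        = (\<Sum>i\<in>UNIV. pmf (law_X \<theta> P r w (t - int k)) i * pmf (P k i) j)"
      by (simp add: mult.commute)
  qed
  finally show ?thesis .
qed

locale imit =
  fixes \<theta> :: "nat pmf" and P :: "nat \<Rightarrow> 'g::finite \<Rightarrow> 'g pmf" and lam :: "'g pmf"
  assumes pos0: "0 \<notin> set_pmf \<theta>"
    and aper: "aperiodic_sf (set_pmf \<theta>) P"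
    and inv: "invariant_dist (hatP \<theta> P) lam"
    and uniq: "\<And>\<mu>. invariant_dist (hatP \<theta> P) \<mu> \<Longrightarrow> \<mu> = lam"
begin

definition pk :: "nat \<Rightarrow> 'g \<Rightarrow> 'g \<Rightarrow> real" where "pk k i j = pmf (P k i) j"

lemma pk_nonneg: "0 \<le> pk k i j" and pk_le1: "pk k i j \<le> 1"
  by (auto simp: pk_def pmf_le_1)

lemma lam_eq: "pmf lam j = measure_pmf.expectation \<theta> (\<lambda>k. \<Sum>i\<in>UNIV. pmf lam i * pk k i j)"
proof -
  have "pmf lam j = pmf (bind_pmf lam (hatP \<theta> P)) j" using inv by (simp add: invariant_dist_def)
  also have "\<dots> = measure_pmf.expectation lam (\<lambda>i. pmf (hatP \<theta> P i) j)" by (rule pmf_bind)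
  also have "\<dots> = (\<Sum>i\<in>UNIV. pmf (hatP \<theta> P i) j * pmf lam i)"
    by (rule integral_measure_pmf_real) auto
  also have "\<dots> = (\<Sum>i\<in>UNIV. measure_pmf.expectation \<theta> (\<lambda>k. pmf lam i * pk k i j))"
    unfolding hatP_def pk_def pmf_bind by (intro sum.cong refl) (simp add: mult.commute)
  also have "\<dots> = measure_pmf.expectation \<theta> (\<lambda>k. \<Sum>i\<in>UNIV. pmf lam i * pk k i j)"
    by (rule sym, rule Bochner_Integration.integral_sum) (rule pmf_integrable_bdd[where B=1], simp add: pk_nonneg abs_mult, intro mult_le_one pmf_le_1 pk_nonneg pk_le1)
  finally show ?thesis .
qed

lemma sum_bdd: "(\<Sum>i\<in>UNIV. pmf lam i * pk k i j) \<le> real (card (UNIV::'g set))"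
proof -
  have "(\<Sum>i\<in>UNIV. pmf lam i * pk k i j) \<le> (\<Sum>i\<in>(UNIV::'g set). 1)"
    by (intro sum_mono mult_le_one pmf_le_1 pk_nonneg pk_le1)
  then show ?thesis by simp
qed

lemma lam_step: "pmf \<theta> k * (pmf lam i * pk k i j) \<le> pmf lam j"
proof -
  have "pmf \<theta> k * (pmf lam i * pk k i j) \<le> pmf \<theta> k * (\<Sum>i\<in>UNIV. pmf lam i * pk k i j)"
    by (intro mult_left_mono member_le_sum) (auto simp: pk_nonneg)
  also have "\<dots> \<le> pmf lam j"
    by (subst lam_eq[of j], rule pmf_le_integral[OF _ sum_bdd]) (intro sum_nonneg mult_nonneg_nonneg pmf_nonneg pk_nonneg)
  finally show ?thesis .
qed

lemma lam_word:
  assumes "set w \<subseteq> set_pmf \<theta>" "word_mat P w i j > 0" "pmf lam i > 0"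
  shows "pmf lam j > 0"
  using assms
proof (induction w arbitrary: j)
  case Nil then show ?case by (auto split: if_splits)
next
  case (Cons a as)
  obtain h where h: "word_mat P as i h > 0" "pmf (P a h) j > 0"
    using word_mat_cons_pos[OF Cons.prems(2)] by blast
  have "pmf lam h > 0" using Cons h by auto
  moreover have "pmf \<theta> a > 0" using Cons.prems(1) by (simp add: pmf_positive)
  ultimately have "0 < pmf \<theta> a * (pmf lam h * pk a h j)" using h by (simp add: pk_def)
  also have "\<dots> \<le> pmf lam j" by (rule lam_step)
  finally show ?case .
qed

lemma irred: "\<exists>w. w \<noteq> [] \<and> set w \<subseteq> set_pmf \<theta> \<and> word_mat P w i j > 0"
  using aper unfolding aperiodic_sf_def irreducible_sf_def words_def by blast

lemma lam_pos: "pmf lam j > 0"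
proof -
  obtain i where "i \<in> set_pmf lam" using set_pmf_not_empty by fast
  then have "pmf lam i > 0" by (simp add: pmf_positive)
  with irred[of i j] lam_word show ?thesis by blast
qed

definition wt :: "nat \<Rightarrow> 'g \<Rightarrow> 'g \<Rightarrow> real" where
  "wt k i j = pmf lam i * pk k i j / pmf lam j"

lemma wt_nonneg: "0 \<le> wt k i j"
  unfolding wt_def by (intro divide_nonneg_nonneg mult_nonneg_nonneg pmf_nonneg pk_nonneg)

lemma wt_le: "wt k i j \<le> 1 / pmf lam j"
  unfolding wt_def using lam_pos[of j]
  by (intro divide_right_mono mult_le_one pmf_le_1 pk_nonneg pk_le1) auto

lemma theta_wt_le1: "pmf \<theta> k * wt k i j \<le> 1"
proof -
  have "pmf \<theta> k * wt k i j = pmf \<theta> k * (pmf lam i * pk k i j) / pmf lam j"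
    by (simp add: wt_def)
  also have "\<dots> \<le> pmf lam j / pmf lam j"
    using lam_pos[of j] lam_step[of k i j] by (intro divide_right_mono) auto
  also have "\<dots> = 1" using lam_pos[of j] by simp
  finally show ?thesis .
qed

definition harm :: "(int \<Rightarrow> 'g \<Rightarrow> real) \<Rightarrow> bool" where
  "harm h \<longleftrightarrow> (\<forall>t j. h t j = measure_pmf.expectation \<theta> (\<lambda>k. \<Sum>i\<in>UNIV. wt k i j * h (t - int k) i))"

definition bdd :: "(int \<Rightarrow> 'g \<Rightarrow> real) \<Rightarrow> real \<Rightarrow> bool" where
  "bdd h B \<longleftrightarrow> (\<forall>t j. \<bar>h t j\<bar> \<le> B)"

lemma integ_wt:
  assumes "bdd h B"
  shows "integrable (measure_pmf \<theta>) (\<lambda>k. \<Sum>i\<in>UNIV. wt k i j * h (t - int k) i)"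
proof (rule pmf_integrable_bdd[where B="real (card (UNIV::'g set)) * (B / pmf lam j)"])
  fix k
  have "\<bar>\<Sum>i\<in>UNIV. wt k i j * h (t - int k) i\<bar> \<le> (\<Sum>i\<in>UNIV. \<bar>wt k i j * h (t - int k) i\<bar>)"
    by (rule sum_abs)
  also have "\<dots> \<le> (\<Sum>i\<in>(UNIV::'g set). B / pmf lam j)"
  proof (intro sum_mono)
    fix i
    have "\<bar>wt k i j * h (t - int k) i\<bar> = wt k i j * \<bar>h (t - int k) i\<bar>"
      using wt_nonneg by (simp add: abs_mult)
    also have "\<dots> \<le> (1 / pmf lam j) * B"
      using assms wt_le wt_nonneg unfolding bdd_def
      by (intro mult_mono) (auto simp: lam_pos less_imp_le)
    finally show "\<bar>wt k i j * h (t - int k) i\<bar> \<le> B / pmf lam j" by simp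
  qed
  also have "\<dots> = real (card (UNIV::'g set)) * (B / pmf lam j)" by simp
  finally show "\<bar>\<Sum>i\<in>UNIV. wt k i j * h (t - int k) i\<bar> \<le> real (card (UNIV::'g set)) * (B / pmf lam j)" .
qed

lemma integ_wt1: "integrable (measure_pmf \<theta>) (\<lambda>k. \<Sum>i\<in>UNIV. wt k i j)"
  using integ_wt[of "\<lambda>_ _. 1" 1 j 0] by (simp add: bdd_def)

lemma wt_sum_int: "measure_pmf.expectation \<theta> (\<lambda>k. \<Sum>i\<in>UNIV. wt k i j) = 1"
proof -
  have "(\<lambda>k. \<Sum>i\<in>UNIV. wt k i j) = (\<lambda>k. (\<Sum>i\<in>UNIV. pmf lam i * pk k i j) / pmf lam j)"
    by (simp add: wt_def sum_divide_distrib)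
  then have "measure_pmf.expectation \<theta> (\<lambda>k. \<Sum>i\<in>UNIV. wt k i j)
      = measure_pmf.expectation \<theta> (\<lambda>k. \<Sum>i\<in>UNIV. pmf lam i * pk k i j) / pmf lam j"
    by simp
  also have "\<dots> = pmf lam j / pmf lam j" by (simp only: lam_eq[of j, symmetric])
  also have "\<dots> = 1" using lam_pos[of j] by simp
  finally show ?thesis .
qed

lemma onestep:
  assumes "harm g" "bdd g B" "\<And>t j. g t j \<le> M"
  shows "pmf \<theta> k * wt k i j * (M - g (t - int k) i) \<le> M - g t j"
proof -
  define f where "f = (\<lambda>k. \<Sum>i\<in>UNIV. wt k i j * (M - g (t - int k) i))"
  have feq: "f = (\<lambda>k. M * (\<Sum>i\<in>UNIV. wt k i j) - (\<Sum>i\<in>UNIV. wt k i j * g (t - int k) i))"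
    unfolding f_def by (simp add: sum_distrib_left right_diff_distrib sum_subtractf algebra_simps)
  have i1: "integrable (measure_pmf \<theta>) (\<lambda>k. M * (\<Sum>i\<in>UNIV. wt k i j))"
    using integ_wt1 by simp
  have i2: "integrable (measure_pmf \<theta>) (\<lambda>k. \<Sum>i\<in>UNIV. wt k i j * g (t - int k) i)"
    using integ_wt[OF assms(2)] by simp
  have intf: "integrable (measure_pmf \<theta>) f" unfolding feq using i1 i2 by simp
  have hg: "g t j = measure_pmf.expectation \<theta> (\<lambda>k. \<Sum>i\<in>UNIV. wt k i j * g (t - int k) i)"
    using assms(1) unfolding harm_def by blast
  have "measure_pmf.expectation \<theta> f = M * 1 - g t j"
    unfolding feq using i1 i2 wt_sum_int[of j] by (subst Bochner_Integration.integral_diff[OF i1 i2]) (simp add: hg[symmetric])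
  moreover have "pmf \<theta> k * f k \<le> measure_pmf.expectation \<theta> f"
    by (rule pmf_le_integral'[OF intf]) (auto simp: f_def assms(3) wt_nonneg intro!: sum_nonneg)
  moreover have "wt k i j * (M - g (t - int k) i) \<le> f k"
    unfolding f_def by (rule member_le_sum) (auto simp: assms(3) wt_nonneg)
  ultimately show ?thesis
    by (smt (verit) mult.assoc mult_left_mono pmf_nonneg)
qed

inductive bpath :: "'g \<Rightarrow> nat \<Rightarrow> 'g \<Rightarrow> real \<Rightarrow> bool" where
  bp_refl: "bpath j 0 j 1"
| bp_step: "pmf \<theta> k > 0 \<Longrightarrow> pk k h j > 0 \<Longrightarrow> bpath h s i c \<Longrightarrow> bpath j (k + s) i (pmf \<theta> k * wt k h j * c)"

lemma bpath_pos: "bpath j s i c \<Longrightarrow> 0 < c \<and> c \<le> 1"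
proof (induction rule: bpath.induct)
  case (bp_refl j) then show ?case by simp
next
  case (bp_step k h j s i c)
  have "wt k h j > 0" unfolding wt_def using bp_step lam_pos by simp
  then have "pmf \<theta> k * wt k h j > 0" using bp_step by simp
  moreover have "pmf \<theta> k * wt k h j \<le> 1" by (rule theta_wt_le1)
  ultimately show ?case using bp_step.IH by (simp add: mult_le_one)
qed

lemma bpath_prop:
  assumes "harm g" "bdd g B" "\<And>t j. g t j \<le> M"
  shows "bpath j s i c \<Longrightarrow> c * (M - g (t - int s) i) \<le> M - g t j"
proof (induction arbitrary: t rule: bpath.induct)
  case (bp_refl j) then show ?case by simp
next
  case (bp_step k h j s i c)
  have ih: "c * (M - g (t - int k - int s) i) \<le> M - g (t - int k) h" by (rule bp_step.IH)
  have one: "pmf \<theta> k * wt k h j * (M - g (t - int k) h) \<le> M - g t j" by (rule onestep[OF assms])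
  have nn: "0 \<le> pmf \<theta> k * wt k h j" by (simp add: wt_nonneg)
  have "pmf \<theta> k * wt k h j * c * (M - g (t - int (k + s)) i)
      = pmf \<theta> k * wt k h j * (c * (M - g (t - int k - int s) i))" by (simp add: algebra_simps)
  also have "\<dots> \<le> pmf \<theta> k * wt k h j * (M - g (t - int k) h)" by (rule mult_left_mono[OF ih nn])
  also have "\<dots> \<le> M - g t j" by (rule one)
  finally show ?case .
qed

lemma bpath_trans: "bpath j s h c1 \<Longrightarrow> bpath h s' i c2 \<Longrightarrow> bpath j (s + s') i (c1 * c2)"
proof (induction rule: bpath.induct)
  case (bp_refl j) then show ?case by simp
next
  case (bp_step k h0 j s i0 c)
  have "bpath j (k + (s + s')) i (pmf \<theta> k * wt k h0 j * (c * c2))"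
    using bp_step by (intro bpath.bp_step) auto
  then show ?case by (simp add: ac_simps)
qed

lemma bpath_pow: "bpath j s j c \<Longrightarrow> bpath j (l * s) j (c ^ l)"
proof (induction l)
  case 0 then show ?case using bp_refl by simp
next
  case (Suc l)
  then have "bpath j (s + l * s) j (c * c ^ l)" using bpath_trans by blast
  then show ?case by simp
qed

lemma bpath_word:
  assumes "set w \<subseteq> set_pmf \<theta>" "word_mat P w i j > 0"
  shows "\<exists>c. bpath j (sum_list w) i c"
  using assms
proof (induction w arbitrary: j)
  case Nil then show ?case using bp_refl by (auto split: if_splits)
next
  case (Cons a as)
  obtain h where h: "word_mat P as i h > 0" "pmf (P a h) j > 0"
    using word_mat_cons_pos[OF Cons.prems(2)] by blast
  obtain c where c: "bpath h (sum_list as) i c" using Cons h by auto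
  have "pmf \<theta> a > 0" using Cons.prems(1) by (simp add: pmf_positive)
  then have "bpath j (a + sum_list as) i (pmf \<theta> a * wt a h j * c)"
    using h c by (intro bp_step) (auto simp: pk_def)
  then show ?case by auto
qed

lemma harm_diff:
  assumes "harm h1" "harm h2" "bdd h1 B1" "bdd h2 B2"
  shows "harm (\<lambda>t j. h1 t j - h2 t j)"
  unfolding harm_def
proof (intro allI)
  fix t j
  have e1: "h1 t j = measure_pmf.expectation \<theta> (\<lambda>k. \<Sum>i\<in>UNIV. wt k i j * h1 (t - int k) i)"
    using assms(1) unfolding harm_def by blast
  have e2: "h2 t j = measure_pmf.expectation \<theta> (\<lambda>k. \<Sum>i\<in>UNIV. wt k i j * h2 (t - int k) i)"
    using assms(2) unfolding harm_def by blast
  have "(\<lambda>k. \<Sum>i\<in>UNIV. wt k i j * (h1 (t - int k) i - h2 (t - int k) i))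
     = (\<lambda>k. (\<Sum>i\<in>UNIV. wt k i j * h1 (t - int k) i) - (\<Sum>i\<in>UNIV. wt k i j * h2 (t - int k) i))"
    by (simp add: right_diff_distrib sum_subtractf)
  then show "h1 t j - h2 t j = measure_pmf.expectation \<theta> (\<lambda>k. \<Sum>i\<in>UNIV. wt k i j * (h1 (t - int k) i - h2 (t - int k) i))"
    using e1 e2 Bochner_Integration.integral_diff[OF integ_wt[OF assms(3)] integ_wt[OF assms(4)]] by simp
qed

lemma harm_neg:
  assumes "harm h"
  shows "harm (\<lambda>t j. - h t j)"
  unfolding harm_def
proof (intro allI)
  fix t j
  have e1: "h t j = measure_pmf.expectation \<theta> (\<lambda>k. \<Sum>i\<in>UNIV. wt k i j * h (t - int k) i)"
    using assms(1) unfolding harm_def by blast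
  have "(\<lambda>k. \<Sum>i\<in>UNIV. wt k i j * (- h (t - int k) i)) = (\<lambda>k. - (\<Sum>i\<in>UNIV. wt k i j * h (t - int k) i))"
    by (simp add: sum_negf)
  then show "- h t j = measure_pmf.expectation \<theta> (\<lambda>k. \<Sum>i\<in>UNIV. wt k i j * (- h (t - int k) i))"
    using e1 by simp
qed

lemma harm_shift:
  assumes "harm h"
  shows "harm (\<lambda>t j. h (t - a) j)"
  unfolding harm_def
proof (intro allI)
  fix t j
  have e1: "h (t - a) j = measure_pmf.expectation \<theta> (\<lambda>k. \<Sum>i\<in>UNIV. wt k i j * h (t - a - int k) i)"
    using assms(1) unfolding harm_def by blast
  have "(\<lambda>k. \<Sum>i\<in>UNIV. wt k i j * h (t - int k - a) i) = (\<lambda>k. \<Sum>i\<in>UNIV. wt k i j * h (t - a - int k) i)"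
    by (simp add: algebra_simps)
  then show "h (t - a) j = measure_pmf.expectation \<theta> (\<lambda>k. \<Sum>i\<in>UNIV. wt k i j * h (t - int k - a) i)"
    using e1 by simp
qed

lemma telescope:
  fixes h :: "int \<Rightarrow> 'g \<Rightarrow> real"
  shows "(\<Sum>l<L. h (t - int (l * a)) j - h (t - int (l * a) - int a) j) = h t j - h (t - int (L * a)) j"
  by (induction L) (auto simp: algebra_simps)

lemma step1:
  assumes hh: "harm h" and hb: "bdd h B" and loops: "\<And>j. \<exists>c. bpath j a j c"
  shows "h t j - h (t - int a) j \<le> 0"
proof (rule ccontr)
  assume contra: "\<not> ?thesis"
  define g where "g = (\<lambda>t j. h t j - h (t - int a) j)"
  have hs: "harm (\<lambda>t j. h (t - int a) j)" by (rule harm_shift[OF hh])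
  have bs: "bdd (\<lambda>t j. h (t - int a) j) B" using hb by (simp add: bdd_def)
  have hg: "harm g" unfolding g_def by (rule harm_diff[OF hh hs hb bs])
  have B0: "0 \<le> B" using hb unfolding bdd_def by (meson abs_ge_zero order_trans)
  have gb: "\<bar>g t j\<bar> \<le> 2 * B" for t j
    using hb unfolding g_def bdd_def by (smt (verit))
  have bg: "bdd g (2 * B)" using gb by (simp add: bdd_def)
  define S where "S = range (\<lambda>p. g (fst p) (snd p))"
  have bddS: "bdd_above S" unfolding S_def using gb
    by (intro bdd_aboveI[where M="2*B"]) (auto simp: abs_le_iff)
  define M where "M = Sup S"
  have gS: "g t j \<in> S" for t j unfolding S_def by (rule image_eqI[where x="(t,j)"]) auto
  have gM: "g t j \<le> M" for t j
    unfolding M_def using bddS gS by (intro cSup_upper) auto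
  have Mpos: "M > 0" using contra gM[of t j] unfolding g_def by linarith
  obtain cf where cf: "\<And>j. bpath j a j (cf j)" using loops by metis
  have cf01: "0 < cf j \<and> cf j \<le> 1" for j using bpath_pos[OF cf] by blast
  define cmin where "cmin = Min (range cf)"
  have cmin_pos: "0 < cmin" unfolding cmin_def using cf01 by (subst Min_gr_iff) auto
  have cmin_le: "cmin \<le> cf j" for j unfolding cmin_def by (rule Min_le) auto
  define L where "L = nat \<lceil>4 * B / M\<rceil> + 1"
  have LM: "real L * M / 2 > 2 * B"
  proof -
    have "real L > 4 * B / M" unfolding L_def by linarith
    then have "real L * M > 4 * B" using Mpos by (simp add: field_simps)
    then show ?thesis by simp
  qed
  define \<delta> where "\<delta> = cmin ^ L * M / 2"
  have dpos: "\<delta> > 0" unfolding \<delta>_def using cmin_pos Mpos by simp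
  have "M - \<delta> < Sup S" using dpos unfolding M_def by simp
  then obtain x where "x \<in> S" "M - \<delta> < x"
    using less_cSup_iff[OF _ bddS] unfolding S_def by blast
  then obtain t0 j0 where t0: "M - \<delta> < g t0 j0" unfolding S_def by auto
  have big: "g (t0 - int (l * a)) j0 > M / 2" if "l < L" for l
  proof -
    have bp: "bpath j0 (l * a) j0 (cf j0 ^ l)" by (rule bpath_pow[OF cf])
    have c1: "cf j0 ^ l * (M - g (t0 - int (l * a)) j0) \<le> M - g t0 j0"
      by (rule bpath_prop[OF hg bg gM bp])
    have cpos: "0 < cf j0 ^ l" using cf01 by simp
    have "cmin ^ L \<le> cf j0 ^ L" using cmin_pos cmin_le by (intro power_mono) auto
    also have "\<dots> \<le> cf j0 ^ l" using cf01[of j0] that by (intro power_decreasing) auto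
    finally have "\<delta> \<le> cf j0 ^ l * M / 2" unfolding \<delta>_def using Mpos by (simp add: mult_right_mono)
    then have "cf j0 ^ l * (M - g (t0 - int (l * a)) j0) < cf j0 ^ l * (M / 2)"
      using c1 t0 by simp
    then have "M - g (t0 - int (l * a)) j0 < M / 2" using cpos mult_less_cancel_left_pos by blast
    then show ?thesis by simp
  qed
  have "(\<Sum>l<L. g (t0 - int (l * a)) j0) \<ge> (\<Sum>l<L. M / 2)"
    using big by (intro sum_mono) (simp add: less_imp_le)
  then have "(\<Sum>l<L. g (t0 - int (l * a)) j0) \<ge> real L * M / 2" by simp
  moreover have "(\<Sum>l<L. g (t0 - int (l * a)) j0) = h t0 j0 - h (t0 - int (L * a)) j0"
    unfolding g_def by (rule telescope)
  moreover have "\<bar>h t0 j0 - h (t0 - int (L * a)) j0\<bar> \<le> 2 * B" using hb unfolding bdd_def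
    by (smt (verit))
  ultimately show False using LM by linarith
qed

definition per :: "(int \<Rightarrow> 'g \<Rightarrow> real) \<Rightarrow> nat \<Rightarrow> bool" where
  "per h p \<longleftrightarrow> (\<forall>t j. h t j = h (t - int p) j)"

lemma step1_per:
  assumes hh: "harm h" and hb: "bdd h B" and loops: "\<And>j. \<exists>c. bpath j a j c"
  shows "per h a"
  unfolding per_def
proof (intro allI)
  fix t j
  have "h t j - h (t - int a) j \<le> 0" by (rule step1[OF hh hb loops])
  moreover have "(- h t j) - (- h (t - int a) j) \<le> 0"
    by (rule step1[OF harm_neg[OF hh] _ loops, of B]) (use hb in \<open>simp add: bdd_def\<close>)
  ultimately show "h t j = h (t - int a) j" by linarith
qed

lemma per_mult: "per h p \<Longrightarrow> per h (l * p)"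
proof (induction l)
  case 0 then show ?case by (simp add: per_def)
next
  case (Suc l)
  show ?case unfolding per_def
  proof (intro allI)
    fix t j
    have "h t j = h (t - int p) j" using Suc.prems unfolding per_def by blast
    also have "\<dots> = h (t - int p - int (l * p)) j" using Suc.IH[OF Suc.prems] unfolding per_def by blast
    finally show "h t j = h (t - int (Suc l * p)) j" by (simp add: algebra_simps)
  qed
qed

lemma per_gcd:
  assumes "per h p" "per h q"
  shows "per h (gcd p q)"
proof (cases "p = 0")
  case True then show ?thesis using assms by simp
next
  case False
  obtain x y where xy: "p * x = q * y + gcd p q" using bezout_nat[OF False] by blast
  show ?thesis unfolding per_def
  proof (intro allI)
    fix t j
    have "h (t - int (gcd p q)) j = h (t - int (gcd p q) - int (y * q)) j"
      using per_mult[OF assms(2), of y] unfolding per_def by blast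
    also have "t - int (gcd p q) - int (y * q) = t - int (x * p)"
      using arg_cong[OF xy, of int] by (simp add: algebra_simps)
    also have "h (t - int (x * p)) j = h t j"
      using per_mult[OF assms(1), of x] unfolding per_def by metis
    finally show "h t j = h (t - int (gcd p q)) j" by simp
  qed
qed

lemma per_Gcd:
  assumes "finite F" "\<And>y. y \<in> F \<Longrightarrow> per h (y * Q)"
  shows "per h (Gcd F * Q)"
  using assms
proof (induction F rule: finite_induct)
  case empty then show ?case by (simp add: per_def)
next
  case (insert y F)
  have "per h (gcd (y * Q) (Gcd F * Q))"
    using insert by (intro per_gcd) auto
  moreover have "gcd (y * Q) (Gcd F * Q) = Gcd (insert y F) * Q"
    by (simp add: gcd_mult_distrib_nat[symmetric] mult.commute)
  ultimately show ?case by simp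
qed

definition D :: "'g \<Rightarrow> nat set" where
  "D j = {s. \<exists>w. w \<noteq> [] \<and> set w \<subseteq> set_pmf \<theta> \<and> word_mat P w j j > 0 \<and> sum_list w = s}"

lemma D_Gcd: "Gcd (D j) = 1"
proof -
  have "depth ` {a \<in> words (set_pmf \<theta>). 0 < word_mat P a j j} = D j"
    unfolding D_def words_def depth_def by blast
  then show ?thesis using aper unfolding aperiodic_sf_def by metis
qed

lemma D_ne: "\<exists>s. s \<in> D j"
  using irred[of j j] unfolding D_def by blast

lemma D_loop: "s \<in> D j \<Longrightarrow> \<exists>c. bpath j s j c"
  unfolding D_def using bpath_word by blast

lemma liouville:
  assumes hh: "harm h" and hb: "bdd h B"
  shows "per h 1"
proof -
  obtain Fs where Fs: "\<And>j. finite (Fs j) \<and> Fs j \<subseteq> D j \<and> Gcd (Fs j) = 1"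
    using finite_Gcd_subset[OF D_Gcd] by metis
  have claim: "\<forall>d. (\<forall>j. d j \<in> D j) \<longrightarrow> per h (\<Prod>j\<in>-T. d j)" if "finite T" for T
    using that
  proof (induction T rule: finite_induct)
    case empty
    show ?case
    proof (intro allI impI)
      fix d :: "'g \<Rightarrow> nat" assume dv: "\<forall>j. d j \<in> D j"
      have "\<exists>c. bpath j (\<Prod>j\<in>-{}. d j) j c" for j
      proof -
        obtain c where c: "bpath j (d j) j c" using D_loop dv by blast
        have "(\<Prod>j\<in>-{}. d j) = (\<Prod>i\<in>UNIV-{j}. d i) * d j"
          using prod.remove[of UNIV j d] by (simp add: mult.commute)
        then show ?thesis using bpath_pow[OF c] by metis
      qed
      then show "per h (\<Prod>j\<in>-{}. d j)" by (rule step1_per[OF hh hb])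
    qed
  next
    case (insert x T)
    show ?case
    proof (intro allI impI)
      fix d :: "'g \<Rightarrow> nat" assume dv: "\<forall>j. d j \<in> D j"
      define Q where "Q = (\<Prod>j\<in>-T-{x}. d j)"
      have "per h (y * Q)" if y: "y \<in> Fs x" for y
      proof -
        have "\<forall>j. (d(x := y)) j \<in> D j" using dv Fs y by auto
        then have p: "per h (\<Prod>j\<in>-T. (d(x := y)) j)" using insert.IH by blast
        have "(\<Prod>j\<in>-T. (d(x := y)) j) = (d(x := y)) x * (\<Prod>j\<in>-T-{x}. (d(x := y)) j)"
          using insert.hyps by (intro prod.remove) auto
        also have "(\<Prod>j\<in>-T-{x}. (d(x := y)) j) = Q"
          unfolding Q_def by (intro prod.cong) auto
        finally show ?thesis using p by simp
      qed
      then have "per h (Gcd (Fs x) * Q)" using Fs by (intro per_Gcd) auto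
      then show "per h (\<Prod>j\<in>- insert x T. d j)" using Fs unfolding Q_def
        by (simp add: Compl_insert)
    qed
  qed
  define d where "d = (\<lambda>j. SOME s. s \<in> D j)"
  have "\<forall>j. d j \<in> D j" unfolding d_def using D_ne by (metis someI)
  moreover have "finite (UNIV :: 'g set)" by simp
  ultimately have "per h (\<Prod>j\<in>-UNIV. d j)" using claim[of UNIV] by blast
  then show ?thesis by simp
qed

lemma per1_const:
  assumes "per h 1"
  shows "h t j = h 0 j"
proof -
  have "h (int n) j = h 0 j \<and> h (- int n) j = h 0 j" for n
  proof (induction n)
    case 0 then show ?case by simp
  next
    case (Suc n)
    have a0: "h (int (Suc n)) j = h (int (Suc n) - int 1) j"
      using assms unfolding per_def by blast
    have a: "h (int (Suc n)) j = h (int n) j" using a0 by simp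
    have b0: "h (- int n) j = h (- int n - int 1) j"
      using assms unfolding per_def by blast
    have "- int n - int 1 = - int (Suc n)" by simp
    then have b: "h (- int n) j = h (- int (Suc n)) j" using b0 by metis
    show ?case using a b Suc by simp
  qed
  moreover have "t = int (nat t) \<or> t = - int (nat (- t))" by arith
  ultimately show ?thesis by metis
qed

lemma entire_const:
  fixes \<nu> :: "int \<Rightarrow> 'g \<Rightarrow> real"
  assumes nn: "\<And>t j. 0 \<le> \<nu> t j"
    and s1: "\<And>t. (\<Sum>j\<in>UNIV. \<nu> t j) = 1"
    and rec: "\<And>t j. \<nu> t j = measure_pmf.expectation \<theta> (\<lambda>k. \<Sum>i\<in>UNIV. \<nu> (t - int k) i * pk k i j)"
  shows "\<nu> t j = pmf lam j"
proof -
  define h where "h = (\<lambda>t j. \<nu> t j / pmf lam j)"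
  define B where "B = (\<Sum>j\<in>UNIV. 1 / pmf lam j)"
  have le1: "\<nu> t j \<le> 1" for t j
    using member_le_sum[of j UNIV "\<nu> t"] nn s1 by simp
  have hb: "bdd h B" unfolding bdd_def
  proof (intro allI)
    fix t j
    have "\<bar>h t j\<bar> = \<nu> t j / pmf lam j" unfolding h_def using nn lam_pos[of j] by simp
    also have "\<dots> \<le> 1 / pmf lam j" using le1 lam_pos[of j] by (intro divide_right_mono) auto
    also have "\<dots> \<le> B" unfolding B_def using lam_pos
      by (intro member_le_sum) (auto simp: less_imp_le)
    finally show "\<bar>h t j\<bar> \<le> B" .
  qed
  have hh: "harm h" unfolding harm_def
  proof (intro allI)
    fix t j
    have eq: "(\<lambda>k. \<Sum>i\<in>UNIV. wt k i j * h (t - int k) i)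
        = (\<lambda>k. (\<Sum>i\<in>UNIV. \<nu> (t - int k) i * pk k i j) / pmf lam j)"
    proof (intro ext)
      fix k
      have "wt k i j * h (t - int k) i = \<nu> (t - int k) i * pk k i j / pmf lam j" for i
        unfolding wt_def h_def using lam_pos[of i] lam_pos[of j] by (simp add: field_simps)
      then show "(\<Sum>i\<in>UNIV. wt k i j * h (t - int k) i) = (\<Sum>i\<in>UNIV. \<nu> (t - int k) i * pk k i j) / pmf lam j"
        by (simp add: sum_divide_distrib)
    qed
    show "h t j = measure_pmf.expectation \<theta> (\<lambda>k. \<Sum>i\<in>UNIV. wt k i j * h (t - int k) i)"
      unfolding eq using rec[of t j] by (simp add: h_def)
  qed
  have c: "h t j = h 0 j" for t j by (rule per1_const[OF liouville[OF hh hb]])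
  have nc: "\<nu> t j = \<nu> 0 j" for t j
    using c[of t j] lam_pos[of j] unfolding h_def by simp
  have prob: "(\<integral>\<^sup>+x. ennreal (\<nu> 0 x) \<partial>count_space UNIV) = 1"
    using nn s1 by (simp add: nn_integral_count_space_finite)
  define q where "q = embed_pmf (\<nu> 0)"
  have pq: "pmf q x = \<nu> 0 x" for x unfolding q_def using nn prob by (simp add: pmf_embed_pmf)
  have "invariant_dist (hatP \<theta> P) q" unfolding invariant_dist_def
  proof (rule pmf_eqI)
    fix j
    have "pmf (bind_pmf q (hatP \<theta> P)) j = measure_pmf.expectation q (\<lambda>i. pmf (hatP \<theta> P i) j)"
      by (rule pmf_bind)
    also have "\<dots> = (\<Sum>i\<in>UNIV. pmf (hatP \<theta> P i) j * pmf q i)"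
      by (rule integral_measure_pmf_real) auto
    also have "\<dots> = (\<Sum>i\<in>UNIV. measure_pmf.expectation \<theta> (\<lambda>k. \<nu> (0 - int k) i * pk k i j))"
      unfolding hatP_def pk_def pmf_bind pq nc[of "0 - _"] by (intro sum.cong refl) (simp add: mult.commute)
    also have "\<dots> = measure_pmf.expectation \<theta> (\<lambda>k. \<Sum>i\<in>UNIV. \<nu> (0 - int k) i * pk k i j)"
      by (rule sym, rule Bochner_Integration.integral_sum, rule pmf_integrable_bdd[where B=1])
         (simp add: abs_mult nn pk_nonneg, intro mult_le_one le1 pk_nonneg pk_le1)
    also have "\<dots> = pmf q j" using rec[of 0 j] pq by simp
    finally show "pmf (bind_pmf q (hatP \<theta> P)) j = pmf q j" .
  qed
  then have "q = lam" by (rule uniq)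
  then show ?thesis using nc[of t j] pq[of j] by simp
qed

theorem conv:
  fixes w :: "int \<Rightarrow> 'g" and n :: int and g :: 'g
  shows "((\<lambda>r. pmf (law_X \<theta> P r w n) g) \<longlongrightarrow> pmf lam g) at_bot"
proof (rule ccontr)
  assume "\<not> ?thesis"
  then obtain e where e: "e > 0" "\<not> eventually (\<lambda>r. dist (pmf (law_X \<theta> P r w n) g) (pmf lam g) < e) at_bot"
    unfolding tendsto_iff by blast
  then have "\<forall>m::nat. \<exists>r. r \<le> - int m \<and> \<not> dist (pmf (law_X \<theta> P r w n) g) (pmf lam g) < e"
    unfolding eventually_at_bot_linorder by blast
  from choice[OF this] obtain rs where rs0: "\<forall>m::nat. rs m \<le> - int m \<and> \<not> dist (pmf (law_X \<theta> P (rs m) w n) g) (pmf lam g) < e"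
    by blast
  then have rs: "\<And>m::nat. rs m \<le> - int m \<and> \<not> dist (pmf (law_X \<theta> P (rs m) w n) g) (pmf lam g) < e"
    by blast
  define F where "F = (\<lambda>m (x :: int \<times> 'g). pmf (law_X \<theta> P (rs m) w (fst x)) (snd x))"
  have "\<bar>F m x\<bar> \<le> 1" for m x unfolding F_def by (simp add: pmf_le_1)
  then have "\<exists>\<sigma> \<nu>. strict_mono \<sigma> \<and> (\<forall>x. (\<lambda>m. F (\<sigma> m) x) \<longlonglongrightarrow> \<nu> x)"
    by (rule diag_conv)
  then obtain \<sigma> \<nu> where \<sigma>: "strict_mono \<sigma>" and lim: "\<And>x. (\<lambda>m. F (\<sigma> m) x) \<longlonglongrightarrow> \<nu> x"
    by blast
  define \<nu>' where "\<nu>' = (\<lambda>t j. \<nu> (t, j))"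
  have lim': "(\<lambda>m. pmf (law_X \<theta> P (rs (\<sigma> m)) w t) j) \<longlonglongrightarrow> \<nu>' t j" for t j
    using lim[of "(t, j)"] unfolding F_def \<nu>'_def by simp
  have nn: "0 \<le> \<nu>' t j" for t j
    by (rule LIMSEQ_le_const[OF lim']) simp
  have s1: "(\<Sum>j\<in>UNIV. \<nu>' t j) = 1" for t
  proof -
    have "(\<lambda>m. \<Sum>j\<in>UNIV. pmf (law_X \<theta> P (rs (\<sigma> m)) w t) j) \<longlonglongrightarrow> (\<Sum>j\<in>UNIV. \<nu>' t j)"
      by (intro tendsto_sum lim')
    moreover have "(\<lambda>m. \<Sum>j\<in>UNIV. pmf (law_X \<theta> P (rs (\<sigma> m)) w t) j) = (\<lambda>m. 1)"
      by (intro ext sum_pmf_eq_1) auto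
    ultimately have "(\<lambda>m. 1::real) \<longlonglongrightarrow> (\<Sum>j\<in>UNIV. \<nu>' t j)" by simp
    then show ?thesis using LIMSEQ_unique[OF tendsto_const] by metis
  qed
  have ev: "eventually (\<lambda>m. rs (\<sigma> m) < t) sequentially" for t
  proof -
    have "rs (\<sigma> m) < t" if "m \<ge> nat (- t) + 1" for m
    proof -
      have "m \<le> \<sigma> m" by (rule seq_suble[OF \<sigma>])
      then show ?thesis using rs[of "\<sigma> m"] that by linarith
    qed
    then show ?thesis unfolding eventually_sequentially by blast
  qed
  have rec: "\<nu>' t j = measure_pmf.expectation \<theta> (\<lambda>k. \<Sum>i\<in>UNIV. \<nu>' (t - int k) i * pk k i j)" for t j
  proof -
    define s where "s = (\<lambda>m. measure_pmf.expectation \<theta>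
       (\<lambda>k. \<Sum>i\<in>UNIV. pmf (law_X \<theta> P (rs (\<sigma> m)) w (t - int k)) i * pk k i j))"
    have "s \<longlonglongrightarrow> measure_pmf.expectation \<theta> (\<lambda>k. \<Sum>i\<in>UNIV. \<nu>' (t - int k) i * pk k i j)"
      unfolding s_def
    proof (rule integral_dominated_convergence[where w="\<lambda>_. real (card (UNIV::'g set))"])
      show "AE k in measure_pmf \<theta>. (\<lambda>m. \<Sum>i\<in>UNIV. pmf (law_X \<theta> P (rs (\<sigma> m)) w (t - int k)) i * pk k i j)
          \<longlonglongrightarrow> (\<Sum>i\<in>UNIV. \<nu>' (t - int k) i * pk k i j)"
        by (intro AE_I2 tendsto_sum tendsto_mult_right lim')
      show "AE k in measure_pmf \<theta>. norm (\<Sum>i\<in>UNIV. pmf (law_X \<theta> P (rs (\<sigma> m)) w (t - int k)) i * pk k i j)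
          \<le> real (card (UNIV::'g set))" for m
      proof (intro AE_I2)
        fix k
        have "norm (\<Sum>i\<in>UNIV. pmf (law_X \<theta> P (rs (\<sigma> m)) w (t - int k)) i * pk k i j)
           \<le> (\<Sum>i\<in>(UNIV::'g set). 1)"
          by (rule order_trans[OF norm_sum sum_mono])
             (simp add: abs_mult pk_nonneg, intro mult_le_one pmf_le_1 pk_nonneg pk_le1)
        then show "norm (\<Sum>i\<in>UNIV. pmf (law_X \<theta> P (rs (\<sigma> m)) w (t - int k)) i * pk k i j)
           \<le> real (card (UNIV::'g set))" by simp
      qed
    qed simp_all
    moreover have "eventually (\<lambda>m. pmf (law_X \<theta> P (rs (\<sigma> m)) w t) j = s m) sequentially"
      using ev[of t]
    proof eventually_elim
      case (elim m)
      show ?case unfolding s_def pk_def by (rule law_X_rec_real[OF elim pos0])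
    qed
    then have "s \<longlonglongrightarrow> \<nu>' t j" using lim'[of t j] by (rule Lim_transform_eventually[rotated])
    ultimately show ?thesis using LIMSEQ_unique by blast
  qed
  have "\<nu>' n g = pmf lam g" by (rule entire_const[OF nn s1 rec])
  then have "(\<lambda>m. pmf (law_X \<theta> P (rs (\<sigma> m)) w n) g) \<longlonglongrightarrow> pmf lam g" using lim'[of n g] by simp
  then have "eventually (\<lambda>m. dist (pmf (law_X \<theta> P (rs (\<sigma> m)) w n) g) (pmf lam g) < e) sequentially"
    using e(1) by (rule tendstoD)
  then obtain N where "\<forall>m\<ge>N. dist (pmf (law_X \<theta> P (rs (\<sigma> m)) w n) g) (pmf lam g) < e"
    unfolding eventually_sequentially by blast
  then have "dist (pmf (law_X \<theta> P (rs (\<sigma> N)) w n) g) (pmf lam g) < e" by blast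
  with rs[of "\<sigma> N"] show False by blast
qed

end

theorem mainTheorem7:
  fixes \<theta> :: "nat pmf" and P :: "nat \<Rightarrow> 'g::finite \<Rightarrow> 'g pmf"
    and A :: "nat set" and lam :: "'g pmf"
  assumes A_def: "A = set_pmf \<theta>"
    and A_pos: "0 \<notin> A"
    and gcd_A: "Gcd A = 1"
    and aper: "aperiodic_sf A P"
    and inv: "invariant_dist (hatP \<theta> P) lam"
    and uniq: "\<And>\<mu>. invariant_dist (hatP \<theta> P) \<mu> \<Longrightarrow> \<mu> = lam"
  shows "\<forall>(n::int) (w::int \<Rightarrow> 'g) (g::'g).
           ((\<lambda>r. pmf (law_X \<theta> P r w n) g) \<longlongrightarrow> pmf lam g) at_bot"
proof -
  interpret imit \<theta> P lam
  proof (unfold_locales)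
    show "0 \<notin> set_pmf \<theta>" using A_pos A_def by simp
    show "aperiodic_sf (set_pmf \<theta>) P" using aper A_def by simp
    show "invariant_dist (hatP \<theta> P) lam" by (rule inv)
    show "\<And>\<mu>. invariant_dist (hatP \<theta> P) \<mu> \<Longrightarrow> \<mu> = lam" by (rule uniq)
  qed
  show ?thesis using conv by blast
qed

end
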